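(* If $\psi^A_W$ with $A:W\to\{S,I\}$ is a subsystem state belonging to $M_E$ and $|W|>2$, then there exists $X\supseteq W$ such that $D[X]$ is a directed sub-block.
   Context: $D=(V,A)$ is a directed graph on $V=\{1,\dots,N\}$ with rates $T_{ij}\ge0$, $T_{ij}>0$ iff $(j,i)\in A$, $T_{ii}=0$. A subsystem state is $\psi^A_W$ with $W\subseteq V$ nonempty, $A:W\to\{S,I,R\}$; $S_i,I_i$ are single-node states; for $n\notin W$, $\psi^A_WI_n$ is the state on $W\cup\{n\}$ extending $A$ with $n$ in state $I$; $h^X_k(\psi^A_W)$ changes the state of $k\in W$ to $X$. $\mathrm{IN}(X)$ is the set of nodes from which some member of $X$ is reachable by a directed path; $f_E(X,Y,Z)=1$ iff $\mathrm{IN}(X)\cap\mathrm{IN}(Y)=\emptyset$ in $D-Z$ (else $0$), with the convention $f_E(\{n\},\emptyset,\{k\})=0$. A state $\psi^A_W$, $A:W\to\{S,I\}$, induces: $\psi^A_W$; $h^S_k(\psi^A_W)$ for $k\in W$ with $A_k=I$ and $T_{kn}>0$ for some $n\in W$ with $A_n=I$; and for each $k\in W$, $n\in V\setminus W$ with $T_{kn}>0$: the state $h^S_k(\psi^A_W)I_n$ if $f_E(\{n\},W\setminus\{k\},\{k\})=0$, or the states $h^S_k(\psi^A_W)$, $S_kI_n$, $S_k$ if it equals $1$. $M_E$ is the smallest set of subsystem states containing all $S_i,I_i$ and closed under induced states. $D[X]$ is the subgraph induced on $X$. A graph is biconnected if it has at least three vertices, is connected, and remains connected after deleting any single vertex.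 $D[X]$ is a directed sub-block if some node of $X$ is reachable by a directed path within $D[X]$ from every other node of $X$ and the underlying undirected graph of $D[X]$ is biconnected. *)

theory Defs
  imports Complex_Main
begin

datatype nstate = S | I | R

definition verts :: "nat \<Rightarrow> nat set" where
  "verts N = {1..N}"

definition arc :: "nat \<Rightarrow> (nat \<Rightarrow> nat \<Rightarrow> real) \<Rightarrow> nat \<Rightarrow> nat \<Rightarrow> bool" where
  "arc N T j i \<longleftrightarrow> j \<in> verts N \<and> i \<in> verts N \<and> T i j > 0"

text \<open>A subsystem state psi^A_W is a partial map with domain W.\<close>
type_synonym sstate = "nat \<Rightarrow> nstate option"

definition subsystem_state :: "nat \<Rightarrow> sstate \<Rightarrow> bool" where
  "subsystem_state N \<psi> \<longleftrightarrow> dom \<psi> \<noteq> {} \<and> dom \<psi> \<subseteq> verts N"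

definition arcs_minus :: "nat \<Rightarrow> (nat \<Rightarrow> nat \<Rightarrow> real) \<Rightarrow> nat set \<Rightarrow> (nat \<times> nat) set" where
  "arcs_minus N T Z = {(u, v). arc N T u v \<and> u \<notin> Z \<and> v \<notin> Z}"

definition IN :: "nat \<Rightarrow> (nat \<Rightarrow> nat \<Rightarrow> real) \<Rightarrow> nat set \<Rightarrow> nat set \<Rightarrow> nat set" where
  "IN N T Z X = {u. u \<in> verts N - Z \<and> (\<exists>x\<in>X. x \<in> verts N - Z \<and> (u, x) \<in> (arcs_minus N T Z)\<^sup>*)}"

text \<open>f_E(X,Y,Z) as a boolean (True = 1), with the convention f_E({n},{},{k}) = 0.\<close>
definition fE :: "nat \<Rightarrow> (nat \<Rightarrow> nat \<Rightarrow> real) \<Rightarrow> nat set \<Rightarrow> nat set \<Rightarrow> nat set \<Rightarrow> bool" where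
  "fE N T X Y Z \<longleftrightarrow>
     (if (\<exists>n k. X = {n} \<and> Y = {} \<and> Z = {k}) then False
      else IN N T Z X \<inter> IN N T Z Y = {})"

definition induced :: "nat \<Rightarrow> (nat \<Rightarrow> nat \<Rightarrow> real) \<Rightarrow> sstate \<Rightarrow> sstate set" where
  "induced N T \<psi> =
     {\<psi>}
   \<union> {\<psi>(k \<mapsto> S) | k. \<psi> k = Some I \<and> (\<exists>n. \<psi> n = Some I \<and> T k n > 0)}
   \<union> {\<phi>. \<exists>k n. k \<in> dom \<psi> \<and> n \<in> verts N - dom \<psi> \<and> T k n > 0 \<and>
        (if fE N T {n} (dom \<psi> - {k}) {k}
         then \<phi> \<in> {\<psi>(k \<mapsto> S), [k \<mapsto> S, n \<mapsto> I], [k \<mapsto> S]}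
         else \<phi> = \<psi>(k \<mapsto> S, n \<mapsto> I))}"

inductive_set ME :: "nat \<Rightarrow> (nat \<Rightarrow> nat \<Rightarrow> real) \<Rightarrow> sstate set" for N T where
  single_S: "i \<in> verts N \<Longrightarrow> [i \<mapsto> S] \<in> ME N T"
| single_I: "i \<in> verts N \<Longrightarrow> [i \<mapsto> I] \<in> ME N T"
| induce: "\<psi> \<in> ME N T \<Longrightarrow> ran \<psi> \<subseteq> {S, I} \<Longrightarrow> \<phi> \<in> induced N T \<psi> \<Longrightarrow> \<phi> \<in> ME N T"

definition uadj :: "nat \<Rightarrow> (nat \<Rightarrow> nat \<Rightarrow> real) \<Rightarrow> nat set \<Rightarrow> (nat \<times> nat) set" where
  "uadj N T X = {(u, v). u \<in> X \<and> v \<in> X \<and> (arc N T u v \<or> arc N T v u)}"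

definition uconnected :: "nat \<Rightarrow> (nat \<Rightarrow> nat \<Rightarrow> real) \<Rightarrow> nat set \<Rightarrow> bool" where
  "uconnected N T X \<longleftrightarrow> (\<forall>u\<in>X. \<forall>v\<in>X. (u, v) \<in> (uadj N T X)\<^sup>*)"

definition biconnected :: "nat \<Rightarrow> (nat \<Rightarrow> nat \<Rightarrow> real) \<Rightarrow> nat set \<Rightarrow> bool" where
  "biconnected N T X \<longleftrightarrow> finite X \<and> card X \<ge> 3 \<and> uconnected N T X \<and>
     (\<forall>v\<in>X. uconnected N T (X - {v}))"

definition arcs_in :: "nat \<Rightarrow> (nat \<Rightarrow> nat \<Rightarrow> real) \<Rightarrow> nat set \<Rightarrow> (nat \<times> nat) set" where
  "arcs_in N T X = {(u, v). u \<in> X \<and> v \<in> X \<and> arc N T u v}"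

definition directed_subblock :: "nat \<Rightarrow> (nat \<Rightarrow> nat \<Rightarrow> real) \<Rightarrow> nat set \<Rightarrow> bool" where
  "directed_subblock N T X \<longleftrightarrow> X \<subseteq> verts N \<and>
     (\<exists>r\<in>X. \<forall>u\<in>X. (u, r) \<in> (arcs_in N T X)\<^sup>*) \<and> biconnected N T X"

end

theory Submission
  imports Defs "HOL-Library.Transitive_Closure_Table"
begin

definition uedge :: "nat \<Rightarrow> (nat \<Rightarrow> nat \<Rightarrow> real) \<Rightarrow> nat \<Rightarrow> nat \<Rightarrow> bool" where
  "uedge N T x y \<longleftrightarrow> arc N T x y \<or> arc N T y x"

definition rO :: "nat \<Rightarrow> (nat \<Rightarrow> nat \<Rightarrow> real) \<Rightarrow> nat set \<Rightarrow> nat \<Rightarrow> nat \<Rightarrow> bool" where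
  "rO N T X x y \<longleftrightarrow> arc N T x y \<and> x \<notin> X \<and> y \<notin> X"

definition good :: "nat \<Rightarrow> (nat \<Rightarrow> nat \<Rightarrow> real) \<Rightarrow> nat set \<Rightarrow> bool" where
  "good N T X \<longleftrightarrow> X \<subseteq> verts N \<and> (\<exists>r\<in>X. \<forall>u\<in>X. (u, r) \<in> (arcs_in N T X)\<^sup>*) \<and>
     uconnected N T X \<and> (\<forall>v\<in>X. uconnected N T (X - {v}))"

lemma uedge_sym: "uedge N T x y = uedge N T y x"
  unfolding uedge_def by auto

lemma uedge_sym_fun: "(\<lambda>x y. uedge N T y x) = uedge N T"
  using uedge_sym by (intro ext) blast

lemma succ_rev_uedge: "successively (uedge N T) (rev xs) = successively (uedge N T) xs"
  by (metis successively_rev uedge_sym_fun)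

lemma arcs_in_mono: "A \<subseteq> B \<Longrightarrow> arcs_in N T A \<subseteq> arcs_in N T B"
  unfolding arcs_in_def by auto

lemma uadj_mono: "A \<subseteq> B \<Longrightarrow> uadj N T A \<subseteq> uadj N T B"
  unfolding uadj_def by auto

lemma uadj_rt_mono: "(x, y) \<in> (uadj N T A)\<^sup>* \<Longrightarrow> A \<subseteq> B \<Longrightarrow> (x, y) \<in> (uadj N T B)\<^sup>*"
  using rtrancl_mono[OF uadj_mono] by blast

lemma arcs_rt_mono: "(x, y) \<in> (arcs_in N T A)\<^sup>* \<Longrightarrow> A \<subseteq> B \<Longrightarrow> (x, y) \<in> (arcs_in N T B)\<^sup>*"
  using rtrancl_mono[OF arcs_in_mono] by blast

lemma uadj_rt_sym: "(x, y) \<in> (uadj N T Y)\<^sup>* \<Longrightarrow> (y, x) \<in> (uadj N T Y)\<^sup>*"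
proof -
  have "sym (uadj N T Y)" unfolding sym_def uadj_def by auto
  then have "sym ((uadj N T Y)\<^sup>*)" by (rule sym_rtrancl)
  then show "(x, y) \<in> (uadj N T Y)\<^sup>* \<Longrightarrow> (y, x) \<in> (uadj N T Y)\<^sup>*" by (simp add: symD)
qed

lemma conn_to: "(\<forall>z\<in>Y. (z, c) \<in> (uadj N T Y)\<^sup>*) \<Longrightarrow> uconnected N T Y"
  unfolding uconnected_def using uadj_rt_sym rtrancl_trans by metis

lemma chain_reach:
  "successively (uedge N T) (a # q) \<Longrightarrow> set (a # q) \<subseteq> Y \<Longrightarrow> z \<in> set (a # q) \<Longrightarrow> (z, a) \<in> (uadj N T Y)\<^sup>*"
proof (induction q arbitrary: a)
  case Nil
  then show ?case by simp
next
  case (Cons b q)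
  show ?case
  proof (cases "z = a")
    case True then show ?thesis by simp
  next
    case False
    then have "z \<in> set (b # q)" using Cons.prems by simp
    then have "(z, b) \<in> (uadj N T Y)\<^sup>*" using Cons by simp
    moreover have "(b, a) \<in> uadj N T Y" using Cons.prems unfolding uadj_def uedge_def by auto
    ultimately show ?thesis by (rule rtrancl_into_rtrancl)
  qed
qed

lemma succ_prefix: "successively P (xs @ ys) \<Longrightarrow> successively P xs"
  by (simp add: successively_append_iff)

lemma succ_snoc: "successively P (x # xs) \<Longrightarrow> P (last (x # xs)) b \<Longrightarrow> successively P (x # xs @ [b])"
  using successively_append_iff[of P "x # xs" "[b]"] by simp

lemma succ_join: "successively P (xs @ [c]) \<Longrightarrow> successively P (c # ys) \<Longrightarrow> successively P (xs @ c # ys)"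
  using successively_append_iff[of P "xs @ [c]" ys] successively_append_iff[of P "xs" "[c]"]
  by (cases ys) (auto simp: successively_append_iff)

lemma path_succ: "rtrancl_path r x xs y \<Longrightarrow> successively r (x # xs) \<and> last (x # xs) = y"
  by (induction rule: rtrancl_path.induct) auto

lemma path_reach:
  assumes "\<And>a b. r a b \<Longrightarrow> arc N T a b"
  shows "rtrancl_path r x xs y \<Longrightarrow> z \<in> set (x # xs) \<Longrightarrow> (z, y) \<in> (arcs_in N T (set (x # xs)))\<^sup>*"
proof (induction arbitrary: z rule: rtrancl_path.induct)
  case (base x)
  then show ?case by simp
next
  case (step x y ys zz)
  have sub: "set (y # ys) \<subseteq> set (x # y # ys)" by auto
  have yz: "(y, zz) \<in> (arcs_in N T (set (x # y # ys)))\<^sup>*"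
    using step.IH[of y] arcs_rt_mono[OF _ sub] by simp
  show ?case
  proof (cases "z = x")
    case True
    have "(x, y) \<in> arcs_in N T (set (x # y # ys))"
      using assms[OF step.hyps(1)] unfolding arcs_in_def by auto
    then show ?thesis using True yz by (meson converse_rtrancl_into_rtrancl)
  next
    case False
    then show ?thesis using step.IH[of z] step.prems arcs_rt_mono[OF _ sub] by simp
  qed
qed

lemma path_notin: "rtrancl_path (rO N T X) x xs y \<Longrightarrow> set xs \<inter> X = {}"
  by (induction rule: rtrancl_path.induct) (auto simp: rO_def)

lemma path_verts: "rtrancl_path (rO N T X) x xs y \<Longrightarrow> y \<in> verts N \<Longrightarrow> set (x # xs) \<subseteq> verts N"
  by (induction rule: rtrancl_path.induct) (auto simp: rO_def arc_def)

lemma ear_good: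
  assumes g: "good N T X" and a: "a \<in> X" and b: "b \<in> X" and ab: "a \<noteq> b"
    and de: "distinct e" and dis: "set e \<inter> X = {}" and ev: "set e \<subseteq> verts N"
    and ch: "successively (uedge N T) (a # e @ [b])"
    and rt: "\<forall>z\<in>set e. \<exists>t\<in>X. (z, t) \<in> (arcs_in N T (X \<union> set e))\<^sup>*"
  shows "good N T (X \<union> set e)"
proof -
  define X' where "X' = X \<union> set e"
  have gX: "X \<subseteq> verts N" "uconnected N T X" "\<forall>v\<in>X. uconnected N T (X - {v})"
    and rX: "\<exists>r\<in>X. \<forall>u\<in>X. (u, r) \<in> (arcs_in N T X)\<^sup>*"
    using g unfolding good_def by auto
  have ch1: "successively (uedge N T) (a # e)"
    using ch succ_prefix[of "uedge N T" "a # e" "[b]"] by simp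
  have "successively (uedge N T) (rev (a # e @ [b]))" using ch succ_rev_uedge by blast
  then have ch2: "successively (uedge N T) (b # rev e)"
    using succ_prefix[of "uedge N T" "b # rev e" "[a]"] by simp
  have c1: "uconnected N T X'"
  proof (rule conn_to[where c = a], intro ballI)
    fix z assume z: "z \<in> X'"
    show "(z, a) \<in> (uadj N T X')\<^sup>*"
    proof (cases "z \<in> X")
      case True
      then have "(z, a) \<in> (uadj N T X)\<^sup>*" using gX(2) a unfolding uconnected_def by blast
      then show ?thesis using uadj_rt_mono X'_def by blast
    next
      case False
      then have "z \<in> set (a # e)" using z X'_def by auto
      then show ?thesis using chain_reach[OF ch1, of X'] a X'_def by auto
    qed
  qed
  have c2: "uconnected N T (X' - {v})" if v: "v \<in> X'" for v
  proof (cases "v \<in> X")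
    case True
    then have ve: "v \<notin> set e" using dis by auto
    have cX: "uconnected N T (X - {v})" using gX(3) True by blast
    show ?thesis
    proof (cases "v = a")
      case False
      show ?thesis
      proof (rule conn_to[where c = a], intro ballI)
        fix z assume z: "z \<in> X' - {v}"
        show "(z, a) \<in> (uadj N T (X' - {v}))\<^sup>*"
        proof (cases "z \<in> X")
          case True
          then have "(z, a) \<in> (uadj N T (X - {v}))\<^sup>*" using cX a False z unfolding uconnected_def by blast
          then show ?thesis using uadj_rt_mono[of z a N T "X - {v}" "X' - {v}"] X'_def by blast
        next
          case zX: False
          then have "z \<in> set (a # e)" using z X'_def by auto
          moreover have "set (a # e) \<subseteq> X' - {v}" using ve False a X'_def by auto
          ultimately show ?thesis using chain_reach[OF ch1] by blast
        qed
      qed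
    next
      case True
      then have bv: "b \<noteq> v" using ab by auto
      show ?thesis
      proof (rule conn_to[where c = b], intro ballI)
        fix z assume z: "z \<in> X' - {v}"
        show "(z, b) \<in> (uadj N T (X' - {v}))\<^sup>*"
        proof (cases "z \<in> X")
          case True
          then have "(z, b) \<in> (uadj N T (X - {v}))\<^sup>*" using cX b bv z unfolding uconnected_def by blast
          then show ?thesis using uadj_rt_mono[of z b N T "X - {v}" "X' - {v}"] X'_def by blast
        next
          case zX: False
          then have "z \<in> set (b # rev e)" using z X'_def by auto
          moreover have "set (b # rev e) \<subseteq> X' - {v}" using ve bv b X'_def by auto
          ultimately show ?thesis using chain_reach[OF ch2] by blast
        qed
      qed
    qed
  next
    case False
    then have "v \<in> set e" using v X'_def by auto
    then obtain e1 e2 where e12: "e = e1 @ v # e2" by (meson split_list)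
    have v1: "v \<notin> set e1" and v2: "v \<notin> set e2" using de e12 by auto
    have sub: "X \<subseteq> X' - {v}" using False X'_def by auto
    have baY: "(b, a) \<in> (uadj N T (X' - {v}))\<^sup>*"
      using gX(2) a b uadj_rt_mono[OF _ sub] unfolding uconnected_def by blast
    show ?thesis
    proof (rule conn_to[where c = a], intro ballI)
      fix z assume z: "z \<in> X' - {v}"
      show "(z, a) \<in> (uadj N T (X' - {v}))\<^sup>*"
      proof (cases "z \<in> X")
        case True
        then show ?thesis using gX(2) a uadj_rt_mono[OF _ sub] unfolding uconnected_def by blast
      next
        case zX: False
        then have "z \<in> set e1 \<or> z \<in> set e2" using z X'_def e12 by auto
        then show ?thesis
        proof
          assume ze: "z \<in> set e1"
          have "successively (uedge N T) (a # e1)"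
            using ch1 e12 succ_prefix[of "uedge N T" "a # e1" "v # e2"] by simp
          moreover have "set (a # e1) \<subseteq> X' - {v}" using v1 a False X'_def e12 by auto
          ultimately show ?thesis using chain_reach ze by (metis list.set_intros(2))
        next
          assume ze: "z \<in> set e2"
          have "successively (uedge N T) (b # rev e2)"
            using ch2 e12 succ_prefix[of "uedge N T" "b # rev e2" "v # rev e1"] by simp
          moreover have "set (b # rev e2) \<subseteq> X' - {v}" using v2 b False X'_def e12 by auto
          ultimately have "(z, b) \<in> (uadj N T (X' - {v}))\<^sup>*" using chain_reach ze
            by (metis list.set_intros(2) set_rev)
          then show ?thesis using baY by (rule rtrancl_trans)
        qed
      qed
    qed
  qed
  obtain r where r: "r \<in> X" "\<forall>u\<in>X. (u, r) \<in> (arcs_in N T X)\<^sup>*" using rX by blast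
  have subX: "X \<subseteq> X'" using X'_def by auto
  have rt': "\<forall>u\<in>X'. (u, r) \<in> (arcs_in N T X')\<^sup>*"
  proof
    fix u assume u: "u \<in> X'"
    show "(u, r) \<in> (arcs_in N T X')\<^sup>*"
    proof (cases "u \<in> X")
      case True then show ?thesis using r arcs_rt_mono[OF _ subX] by blast
    next
      case False
      then obtain t where t: "t \<in> X" "(u, t) \<in> (arcs_in N T X')\<^sup>*" using rt u X'_def by auto
      moreover have "(t, r) \<in> (arcs_in N T X')\<^sup>*" using r t arcs_rt_mono[OF _ subX] by blast
      ultimately show ?thesis using rtrancl_trans by metis
    qed
  qed
  show ?thesis unfolding good_def X'_def[symmetric]
    using c1 c2 rt' r(1) subX gX(1) ev X'_def by auto
qed

lemma lemA:
  assumes "(u, n) \<in> (arcs_minus N T {k})\<^sup>*" and "n \<notin> X"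
  shows "(\<exists>c y. c \<in> X \<and> c \<noteq> k \<and> arc N T c y \<and> y \<notin> X \<and> (rO N T X)\<^sup>*\<^sup>* y n) \<or>
         (u \<notin> X \<and> (rO N T X)\<^sup>*\<^sup>* u n)"
  using assms(1)
proof (induction rule: converse_rtrancl_induct)
  case base
  then show ?case using assms(2) by auto
next
  case (step y z)
  then have yz: "arc N T y z" "y \<noteq> k" "z \<noteq> k" unfolding arcs_minus_def by auto
  from step.IH show ?case
  proof
    assume "\<exists>c y. c \<in> X \<and> c \<noteq> k \<and> arc N T c y \<and> y \<notin> X \<and> (rO N T X)\<^sup>*\<^sup>* y n"
    then show ?case by blast
  next
    assume z: "z \<notin> X \<and> (rO N T X)\<^sup>*\<^sup>* z n"
    show ?case
    proof (cases "y \<in> X")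
      case True then show ?thesis using z yz by blast
    next
      case False
      then have "rO N T X y z" using z yz unfolding rO_def by auto
      then show ?thesis using z False by (meson converse_rtranclp_into_rtranclp)
    qed
  qed
qed

lemma lemB:
  assumes "(u, w) \<in> (arcs_minus N T {k})\<^sup>*" and "w \<in> X" and "w \<noteq> k"
  shows "u \<notin> X \<longrightarrow> (\<exists>y x. (rO N T X)\<^sup>*\<^sup>* u y \<and> arc N T y x \<and> x \<in> X \<and> x \<noteq> k)"
  using assms(1)
proof (induction rule: converse_rtrancl_induct)
  case base
  then show ?case using assms(2) by auto
next
  case (step y z)
  then have yz: "arc N T y z" "y \<noteq> k" "z \<noteq> k" unfolding arcs_minus_def by auto
  show ?case
  proof
    assume yX: "y \<notin> X"
    show "\<exists>y' x. (rO N T X)\<^sup>*\<^sup>* y y' \<and> arc N T y' x \<and> x \<in> X \<and> x \<noteq> k"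
    proof (cases "z \<in> X")
      case True then show ?thesis using yz by blast
    next
      case False
      then obtain y' x where "(rO N T X)\<^sup>*\<^sup>* z y'" "arc N T y' x" "x \<in> X" "x \<noteq> k" using step.IH by blast
      moreover have "rO N T X y z" using yX False yz unfolding rO_def by auto
      ultimately show ?thesis by (meson converse_rtranclp_into_rtranclp)
    qed
  qed
qed

lemma rO_arc: "rO N T X a b \<Longrightarrow> arc N T a b" unfolding rO_def by simp

lemma ext_step:
  assumes g: "good N T X" and k: "k \<in> X" and n: "n \<in> verts N" "n \<notin> X" and nk: "arc N T n k"
    and un: "(u, n) \<in> (arcs_minus N T {k})\<^sup>*" and uw: "(u, w) \<in> (arcs_minus N T {k})\<^sup>*"
    and w: "w \<in> X" "w \<noteq> k"
  shows "\<exists>X'. insert n X \<subseteq> X' \<and> good N T X'"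
proof -
  have rOarc: "\<And>a b. rO N T X a b \<Longrightarrow> arc N T a b" by (rule rO_arc)
  have uedge_of: "\<And>a b. rO N T X a b \<Longrightarrow> uedge N T a b" unfolding uedge_def rO_def by simp
  from lemA[OF un n(2)] show ?thesis
  proof
    assume "\<exists>c y. c \<in> X \<and> c \<noteq> k \<and> arc N T c y \<and> y \<notin> X \<and> (rO N T X)\<^sup>*\<^sup>* y n"
    then obtain c y where c: "c \<in> X" "c \<noteq> k" "arc N T c y" "y \<notin> X" "(rO N T X)\<^sup>*\<^sup>* y n" by blast
    obtain Ps0 where "rtrancl_path (rO N T X) y Ps0 n" using c(5) rtranclp_eq_rtrancl_path by metis
    then obtain Ps where P: "rtrancl_path (rO N T X) y Ps n" "distinct (y # Ps)"
      using rtrancl_path_distinct by metis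
    define e where "e = y # Ps"
    have ps: "successively (rO N T X) (y # Ps)" "last (y # Ps) = n" using path_succ[OF P(1)] by auto
    have ne: "n \<in> set e" using ps(2) e_def by (metis last_in_set list.distinct(1))
    have ch: "successively (uedge N T) (c # e @ [k])"
    proof -
      have "successively (uedge N T) (y # Ps)"
        by (rule successively_mono[OF ps(1)]) (rule uedge_of)
      then have "successively (uedge N T) (y # Ps @ [k])"
        using succ_snoc[of "uedge N T" y Ps k] ps(2) nk unfolding uedge_def by simp
      then show ?thesis using c(3) unfolding e_def uedge_def by simp
    qed
    have dis: "set e \<inter> X = {}" using path_notin[OF P(1)] c(4) e_def by auto
    have ev: "set e \<subseteq> verts N" using path_verts[OF P(1) n(1)] e_def by simp
    have rt: "\<forall>z\<in>set e. \<exists>t\<in>X. (z, t) \<in> (arcs_in N T (X \<union> set e))\<^sup>*"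
    proof
      fix z assume z: "z \<in> set e"
      have "(z, n) \<in> (arcs_in N T (set (y # Ps)))\<^sup>*"
        using path_reach[of "rO N T X" N T, OF rOarc P(1)] z e_def by simp
      then have "(z, n) \<in> (arcs_in N T (X \<union> set e))\<^sup>*" using arcs_rt_mono e_def by blast
      moreover have "(n, k) \<in> arcs_in N T (X \<union> set e)" using ne k nk unfolding arcs_in_def by auto
      ultimately show "\<exists>t\<in>X. (z, t) \<in> (arcs_in N T (X \<union> set e))\<^sup>*" using k by (meson rtrancl.simps)
    qed
    have "good N T (X \<union> set e)"
      by (rule ear_good[OF g c(1) k c(2) _ dis ev ch rt]) (use P(2) e_def in simp)
    then show ?thesis using ne by blast
  next
    assume u: "u \<notin> X \<and> (rO N T X)\<^sup>*\<^sup>* u n"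
    define Cand where "Cand = (\<lambda>(c, Ps). c \<notin> X \<and> rtrancl_path (rO N T X) c Ps n \<and> distinct (c # Ps) \<and>
        (\<exists>y x. (rO N T X)\<^sup>*\<^sup>* c y \<and> arc N T y x \<and> x \<in> X \<and> x \<noteq> k))"
    obtain Ps0 where "rtrancl_path (rO N T X) u Ps0 n" using u rtranclp_eq_rtrancl_path by metis
    then obtain Ps1 where P1: "rtrancl_path (rO N T X) u Ps1 n" "distinct (u # Ps1)"
      using rtrancl_path_distinct by metis
    have "Cand (u, Ps1)" unfolding Cand_def using P1 u lemB[OF uw w] by auto
    then obtain cp where cp: "Cand cp" "\<forall>q. Cand q \<longrightarrow> length (snd cp) \<le> length (snd q)"
      using ex_has_least_nat[of Cand "(u, Ps1)" "\<lambda>q. length (snd q)"] by blast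
    obtain c Ps where cPs: "cp = (c, Ps)" by fastforce
    have cX: "c \<notin> X" and P: "rtrancl_path (rO N T X) c Ps n" and dP: "distinct (c # Ps)"
      using cp(1) cPs unfolding Cand_def by auto
    obtain y0 x0 where yx: "(rO N T X)\<^sup>*\<^sup>* c y0" "arc N T y0 x0" "x0 \<in> X" "x0 \<noteq> k"
      using cp(1) cPs unfolding Cand_def by auto
    have mn: "\<And>c' Ps'. Cand (c', Ps') \<Longrightarrow> length Ps \<le> length Ps'" using cp(2) cPs by fastforce
    obtain Qs0 where "rtrancl_path (rO N T X) c Qs0 y0" using yx(1) rtranclp_eq_rtrancl_path by metis
    then obtain Qs where Q: "rtrancl_path (rO N T X) c Qs y0" "distinct (c # Qs)"
      using rtrancl_path_distinct by metis
    have disj: "set Qs \<inter> set Ps = {}"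
    proof (rule ccontr)
      assume "set Qs \<inter> set Ps \<noteq> {}"
      then obtain q where q: "q \<in> set Qs" "q \<in> set Ps" by blast
      obtain P1 P2 where p12: "Ps = P1 @ q # P2" using q(2) by (meson split_list)
      obtain Q1 Q2 where q12: "Qs = Q1 @ q # Q2" using q(1) by (meson split_list)
      have pq: "rtrancl_path (rO N T X) q P2 n" using P p12 by (auto elim: rtrancl_path_appendE)
      have qq: "rtrancl_path (rO N T X) q Q2 y0" using Q(1) q12 by (auto elim: rtrancl_path_appendE)
      then have "(rO N T X)\<^sup>*\<^sup>* q y0" using rtranclp_eq_rtrancl_path by metis
      moreover have "q \<notin> X" using path_notin[OF P] q(2) by auto
      moreover have "distinct (q # P2)" using dP p12 by auto
      ultimately have "Cand (q, P2)" unfolding Cand_def using pq yx by auto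
      then have "length Ps \<le> length P2" by (rule mn)
      then show False using p12 by simp
    qed
    define e where "e = rev Qs @ c # Ps"
    have ps: "successively (rO N T X) (c # Ps)" "last (c # Ps) = n" using path_succ[OF P] by auto
    have qs: "successively (rO N T X) (c # Qs)" "last (c # Qs) = y0" using path_succ[OF Q(1)] by auto
    have "n \<in> set (c # Ps)" using ps(2) by (metis last_in_set list.distinct(1))
    then have ne: "n \<in> set e" unfolding e_def by auto
    have "y0 \<in> set (c # Qs)" using qs(2) by (metis last_in_set list.distinct(1))
    then have y0e: "y0 \<in> set e" unfolding e_def by auto
    have ch: "successively (uedge N T) (x0 # e @ [k])"
    proof -
      have a1: "successively (uedge N T) (c # Ps)"
        by (rule successively_mono[OF ps(1)]) (rule uedge_of)
      have a2: "successively (uedge N T) (c # Qs)"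
        by (rule successively_mono[OF qs(1)]) (rule uedge_of)
      have b1: "successively (uedge N T) (c # Ps @ [k])"
        using succ_snoc[OF a1, of k] ps(2) nk unfolding uedge_def by simp
      have b2: "successively (uedge N T) (c # Qs @ [x0])"
        using succ_snoc[OF a2, of x0] qs(2) yx(2) unfolding uedge_def by simp
      have "successively (uedge N T) (rev (c # Qs @ [x0]))" using b2 succ_rev_uedge by metis
      then have b3: "successively (uedge N T) ((x0 # rev Qs) @ [c])" by simp
      have "successively (uedge N T) ((x0 # rev Qs) @ c # Ps @ [k])" by (rule succ_join[OF b3 b1])
      then show ?thesis unfolding e_def by simp
    qed
    have dis: "set e \<inter> X = {}" using path_notin[OF P] path_notin[OF Q(1)] cX e_def by auto
    have y0v: "y0 \<in> verts N" using yx(2) unfolding arc_def by simp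
    have ev: "set e \<subseteq> verts N" using path_verts[OF P n(1)] path_verts[OF Q(1) y0v] e_def by auto
    have de: "distinct e" using dP Q(2) disj e_def by auto
    have rt: "\<forall>z\<in>set e. \<exists>t\<in>X. (z, t) \<in> (arcs_in N T (X \<union> set e))\<^sup>*"
    proof
      fix z assume z: "z \<in> set e"
      show "\<exists>t\<in>X. (z, t) \<in> (arcs_in N T (X \<union> set e))\<^sup>*"
      proof (cases "z \<in> set (c # Ps)")
        case True
        have "(z, n) \<in> (arcs_in N T (set (c # Ps)))\<^sup>*"
          using path_reach[of "rO N T X" N T, OF rOarc P] True by simp
        moreover have "set (c # Ps) \<subseteq> X \<union> set e" using e_def by auto
        ultimately have "(z, n) \<in> (arcs_in N T (X \<union> set e))\<^sup>*" using arcs_rt_mono by blast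
        moreover have "(n, k) \<in> arcs_in N T (X \<union> set e)" using ne k nk unfolding arcs_in_def by auto
        ultimately show ?thesis using k by (meson rtrancl.simps)
      next
        case False
        then have zq: "z \<in> set (c # Qs)" using z e_def by auto
        have "(z, y0) \<in> (arcs_in N T (set (c # Qs)))\<^sup>*"
          using path_reach[of "rO N T X" N T, OF rOarc Q(1)] zq by simp
        moreover have "set (c # Qs) \<subseteq> X \<union> set e" using e_def by auto
        ultimately have "(z, y0) \<in> (arcs_in N T (X \<union> set e))\<^sup>*" using arcs_rt_mono by blast
        moreover have "(y0, x0) \<in> arcs_in N T (X \<union> set e)" using y0e yx unfolding arcs_in_def by auto
        ultimately show ?thesis using yx(3) by (meson rtrancl.simps)
      qed
    qed
    have "good N T (X \<union> set e)"
      by (rule ear_good[OF g yx(3) k yx(4) de dis ev ch rt])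
    then show ?thesis using ne by blast
  qed
qed

lemma uconn_triv: "(\<forall>u\<in>Y. \<forall>v\<in>Y. u = v) \<Longrightarrow> uconnected N T Y"
  unfolding uconnected_def by auto

lemma good_pair:
  assumes "arc N T n k" "n \<noteq> k"
  shows "good N T {k, n}"
proof -
  have v: "{k, n} \<subseteq> verts N" using assms unfolding arc_def by auto
  have r: "\<forall>u\<in>{k, n}. (u, k) \<in> (arcs_in N T {k, n})\<^sup>*"
  proof
    fix u assume "u \<in> {k, n}"
    moreover have "(n, k) \<in> arcs_in N T {k, n}" using assms unfolding arcs_in_def by auto
    ultimately show "(u, k) \<in> (arcs_in N T {k, n})\<^sup>*" by auto
  qed
  have c: "uconnected N T {k, n}"
  proof (rule conn_to[where c = k], intro ballI)
    fix z assume "z \<in> {k, n}"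
    moreover have "(n, k) \<in> uadj N T {k, n}" using assms unfolding uadj_def by auto
    ultimately show "(z, k) \<in> (uadj N T {k, n})\<^sup>*" by auto
  qed
  have c2: "\<forall>v\<in>{k, n}. uconnected N T ({k, n} - {v})"
    by (intro ballI uconn_triv) auto
  show ?thesis unfolding good_def using v r c c2 by blast
qed

lemma inv:
  assumes "\<psi> \<in> ME N T"
  shows "dom \<psi> \<subseteq> verts N \<and> (2 \<le> card (dom \<psi>) \<longrightarrow> (\<exists>X. dom \<psi> \<subseteq> X \<and> good N T X))"
  using assms
proof (induction rule: ME.induct)
  case (single_S i)
  then show ?case by (auto simp: dom_def)
next
  case (single_I i)
  then show ?case by (auto simp: dom_def)
next
  case (induce \<psi> \<phi>)
  have dv: "dom \<psi> \<subseteq> verts N" using induce.IH by simp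
  have IH2: "2 \<le> card (dom \<psi>) \<Longrightarrow> \<exists>X. dom \<psi> \<subseteq> X \<and> good N T X" using induce.IH by simp
  have fin: "finite (dom \<psi>)" using dv finite_subset unfolding verts_def by blast
  from induce.hyps(3) consider (a) "\<phi> = \<psi>"
    | (b) k where "\<phi> = \<psi>(k \<mapsto> S)" "\<psi> k = Some I"
    | (c) k n where "k \<in> dom \<psi>" "n \<in> verts N - dom \<psi>" "T k n > 0"
        "if fE N T {n} (dom \<psi> - {k}) {k}
         then \<phi> \<in> {\<psi>(k \<mapsto> S), [k \<mapsto> S, n \<mapsto> I], [k \<mapsto> S]}
         else \<phi> = \<psi>(k \<mapsto> S, n \<mapsto> I)"
    unfolding induced_def by blast
  then show ?case
  proof cases
    case a
    then show ?thesis using induce.IH by simp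
  next
    case b
    then have "dom \<phi> = dom \<psi>" by auto
    then show ?thesis using induce.IH by simp
  next
    case c
    have kv: "k \<in> verts N" using c(1) dv by auto
    have nk: "arc N T n k" using c(2,3) kv unfolding arc_def by auto
    have nnk: "n \<noteq> k" using c(1,2) by auto
    have gp: "good N T {k, n}" by (rule good_pair[OF nk nnk])
    show ?thesis
    proof (cases "fE N T {n} (dom \<psi> - {k}) {k}")
      case True
      then have "\<phi> \<in> {\<psi>(k \<mapsto> S), [k \<mapsto> S, n \<mapsto> I], [k \<mapsto> S]}" using c(4) by simp
      then have mem: "\<phi> = \<psi>(k \<mapsto> S) \<or> \<phi> = [k \<mapsto> S, n \<mapsto> I] \<or> \<phi> = [k \<mapsto> S]" by simp
      have d1: "dom (\<psi>(k \<mapsto> S)) = dom \<psi>" using c(1) by auto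
      have d2: "dom [k \<mapsto> S, n \<mapsto> I] = {k, n}" by auto
      have d3: "dom [k \<mapsto> S] = {k}" by simp
      consider "dom \<phi> = dom \<psi>" | "dom \<phi> = {k, n}" | "dom \<phi> = {k}"
        using mem d1 d2 d3 by metis
      then show ?thesis
      proof cases
        case 1 then show ?thesis using induce.IH by simp
      next
        case 2 then show ?thesis using gp kv c(2) by auto
      next
        case 3 then show ?thesis using kv by simp
      qed
    next
      case False
      then have phi: "\<phi> = \<psi>(k \<mapsto> S, n \<mapsto> I)" using c(4) by simp
      then have dphi: "dom \<phi> = insert n (dom \<psi>)" using c(1) by auto
      have dvphi: "dom \<phi> \<subseteq> verts N" using dphi dv c(2) by auto
      show ?thesis
      proof (cases "2 \<le> card (dom \<psi>)")
        case False
        then have "card (dom \<psi>) \<le> 1" by simp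
        then have "\<forall>a\<in>dom \<psi>. \<forall>b\<in>dom \<psi>. a = b" using card_le_Suc0_iff_eq[OF fin] by simp
        then have "dom \<psi> = {k}" using c(1) by blast
        then have "dom \<phi> = {k, n}" using dphi by auto
        then show ?thesis using gp dvphi by auto
      next
        case True
        then obtain X where X: "dom \<psi> \<subseteq> X" "good N T X" using IH2 by blast
        have ne: "dom \<psi> - {k} \<noteq> {}"
        proof
          assume "dom \<psi> - {k} = {}"
          then have "dom \<psi> \<subseteq> {k}" by auto
          then have "card (dom \<psi>) \<le> card {k}" by (rule card_mono[rotated]) simp
          then have "card (dom \<psi>) \<le> 1" by simp
          then show False using True by simp
        qed
        have "IN N T {k} {n} \<inter> IN N T {k} (dom \<psi> - {k}) \<noteq> {}"
          using False ne unfolding fE_def by auto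
        then obtain u where u1: "u \<in> IN N T {k} {n}" and u2: "u \<in> IN N T {k} (dom \<psi> - {k})" by blast
        have un: "(u, n) \<in> (arcs_minus N T {k})\<^sup>*" using u1 unfolding IN_def by auto
        obtain w where w: "w \<in> dom \<psi> - {k}" "(u, w) \<in> (arcs_minus N T {k})\<^sup>*"
          using u2 unfolding IN_def by auto
        have "\<exists>X'. insert n X \<subseteq> X' \<and> good N T X'"
        proof (cases "n \<in> X")
          case True
          then have "insert n X \<subseteq> X" by simp
          then show ?thesis using X(2) by blast
        next
          case nX: False
          have kX: "k \<in> X" using X(1) c(1) by blast
          have nV: "n \<in> verts N" using c(2) by simp
          have wX: "w \<in> X" using X(1) w(1) by blast
          have wk: "w \<noteq> k" using w(1) by simp
          show ?thesis by (rule ext_step[OF X(2) kX nV nX nk un w(2) wX wk])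
        qed
        then obtain X' where X': "insert n X \<subseteq> X'" "good N T X'" by blast
        have "dom \<phi> \<subseteq> X'" using dphi X(1) X'(1) by blast
        then show ?thesis using dvphi X'(2) by blast
      qed
    qed
  qed
qed

theorem mainTheorem8:
  fixes N :: nat and T :: "nat \<Rightarrow> nat \<Rightarrow> real" and \<psi> :: sstate
  assumes "\<forall>i\<in>verts N. \<forall>j\<in>verts N. T i j \<ge> 0"
    and "\<forall>i\<in>verts N. T i i = 0"
    and "\<psi> \<in> ME N T"
    and "ran \<psi> \<subseteq> {S, I}"
    and "card (dom \<psi>) > 2"
  shows "\<exists>X. dom \<psi> \<subseteq> X \<and> directed_subblock N T X"
proof -
  obtain X where X: "dom \<psi> \<subseteq> X" "good N T X" using inv[OF assms(3)] assms(5) by auto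
  have XV: "X \<subseteq> verts N" using X(2) unfolding good_def by simp
  have fin: "finite X" using XV finite_subset unfolding verts_def by blast
  have "card (dom \<psi>) \<le> card X" using card_mono[OF fin X(1)] .
  then have "card X \<ge> 3" using assms(5) by simp
  then have "directed_subblock N T X"
    using X(2) fin unfolding directed_subblock_def biconnected_def good_def by auto
  then show ?thesis using X(1) by blast
qed

end
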